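(* Let $f\colon G\to H$ be an epimorphism between graphs. Then there are a graph $M$ and epimorphisms $m\colon G\to M$ and $l\colon M\to H$ such that $f=l\circ m$, $m$ is monotone and $l$ is light.
   Context: A graph is a pair $A=(V(A),E(A))$ with $E(A)\subseteq V(A)^2$ reflexive and symmetric. An epimorphism is a map on vertices sending edges to edges that is surjective on vertices and on edges. A set $S\subseteq V(G)$ is disconnected if $S=P\cup Q$ with $P,Q$ nonempty disjoint and no edge of $G$ between $P$ and $Q$; otherwise connected. An epimorphism is monotone if the preimage of every connected set is connected. An epimorphism $f\colon G\to H$ is light if for every $h\in V(H)$ and distinct $a,b\in f^{-1}(h)$ we have $\langle a,b\rangle\notin E(G)$. *)

theory Defs
  imports Main
begin

type_synonym 'a graph = "'a set \<times> ('a \<times> 'a) set"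

definition verts :: "'a graph \<Rightarrow> 'a set" where "verts A = fst A"
definition edges :: "'a graph \<Rightarrow> ('a \<times> 'a) set" where "edges A = snd A"

definition is_graph :: "'a graph \<Rightarrow> bool" where
  "is_graph A \<longleftrightarrow> edges A \<subseteq> verts A \<times> verts A
     \<and> (\<forall>v\<in>verts A. (v, v) \<in> edges A)
     \<and> (\<forall>a b. (a, b) \<in> edges A \<longrightarrow> (b, a) \<in> edges A)"

definition epimorphism :: "('a \<Rightarrow> 'b) \<Rightarrow> 'a graph \<Rightarrow> 'b graph \<Rightarrow> bool" where
  "epimorphism f G H \<longleftrightarrow>
     f ` verts G \<subseteq> verts H
     \<and> (\<forall>a b. (a, b) \<in> edges G \<longrightarrow> (f a, f b) \<in> edges H)
     \<and> f ` verts G = verts H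
     \<and> (\<lambda>(a, b). (f a, f b)) ` edges G = edges H"

definition disconnected_set :: "'a graph \<Rightarrow> 'a set \<Rightarrow> bool" where
  "disconnected_set G S \<longleftrightarrow>
     (\<exists>P Q. S = P \<union> Q \<and> P \<noteq> {} \<and> Q \<noteq> {} \<and> P \<inter> Q = {}
        \<and> (\<forall>p\<in>P. \<forall>q\<in>Q. (p, q) \<notin> edges G))"

definition connected_set :: "'a graph \<Rightarrow> 'a set \<Rightarrow> bool" where
  "connected_set G S \<longleftrightarrow> \<not> disconnected_set G S"

definition monotone_epi :: "('a \<Rightarrow> 'b) \<Rightarrow> 'a graph \<Rightarrow> 'b graph \<Rightarrow> bool" where
  "monotone_epi f G H \<longleftrightarrow> epimorphism f G H
     \<and> (\<forall>S \<subseteq> verts H. connected_set H S \<longrightarrow> connected_set G (f -` S \<inter> verts G))"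

definition light_epi :: "('a \<Rightarrow> 'b) \<Rightarrow> 'a graph \<Rightarrow> 'b graph \<Rightarrow> bool" where
  "light_epi f G H \<longleftrightarrow> epimorphism f G H
     \<and> (\<forall>h\<in>verts H. \<forall>a\<in>verts G. \<forall>b\<in>verts G.
          f a = h \<and> f b = h \<and> a \<noteq> b \<longrightarrow> (a, b) \<notin> edges G)"

end

theory Submission
  imports Defs
begin

lemma rt_sym:
  assumes "sym R" "(x, y) \<in> R\<^sup>*" shows "(y, x) \<in> R\<^sup>*"
  using sym_rtrancl[OF assms(1)] assms(2) unfolding sym_def by blast

lemma comp_in_P:
  assumes "(x, y) \<in> R\<^sup>*" "R \<subseteq> E" "x \<in> P" "{z. (x, z) \<in> R\<^sup>*} \<subseteq> P \<union> Q"
    "\<forall>p\<in>P. \<forall>q\<in>Q. (p, q) \<notin> E"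
  shows "y \<in> P"
  using assms(1)
proof (induction rule: rtrancl_induct)
  case base then show ?case using assms(3) by simp
next
  case (step y z)
  then have "(x, z) \<in> R\<^sup>*" by auto
  then have "z \<in> P \<union> Q" using assms(4) by auto
  moreover have "(y, z) \<in> E" using step assms(2) by auto
  ultimately show ?case using step assms(5) by blast
qed

theorem proposition4p14:
  fixes f :: "'a \<Rightarrow> 'b" and G :: "'a graph" and H :: "'b graph"
  assumes "is_graph G" and "is_graph H" and "epimorphism f G H"
  shows "\<exists>(M :: 'a set graph) m l. is_graph M
           \<and> epimorphism m G M \<and> epimorphism l M H
           \<and> (\<forall>x\<in>verts G. f x = l (m x))
           \<and> monotone_epi m G M \<and> light_epi l M H"
proof -
  define V where "V = verts G"
  define E where "E = edges G"
  define R where "R = {(a, b). (a, b) \<in> E \<and> f a = f b}"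
  define m where "m x = {y. (x, y) \<in> R\<^sup>*}" for x
  define M :: "'a set graph" where "M = (m ` V, (\<lambda>(a, b). (m a, m b)) ` E)"
  define l where "l C = f (SOME x. x \<in> C)" for C
  have EV: "E \<subseteq> V \<times> V" and refl: "\<And>v. v \<in> V \<Longrightarrow> (v, v) \<in> E"
    and symE: "\<And>a b. (a, b) \<in> E \<Longrightarrow> (b, a) \<in> E"
    using assms(1) unfolding is_graph_def V_def E_def by auto
  have RE: "R \<subseteq> E" unfolding R_def by auto
  have symR: "sym R" unfolding R_def sym_def using symE by auto
  have xin: "x \<in> m x" for x unfolding m_def by simp
  have msame: "m y = m x" if "y \<in> m x" for x y
  proof -
    have xy: "(x, y) \<in> R\<^sup>*" using that unfolding m_def by simp
    then have yx: "(y, x) \<in> R\<^sup>*" using rt_sym[OF symR] by blast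
    show ?thesis unfolding m_def
    proof (intro set_eqI iffI)
      fix z assume "z \<in> {z. (y, z) \<in> R\<^sup>*}" then show "z \<in> {z. (x, z) \<in> R\<^sup>*}"
        using xy rtrancl_trans[of x y R z] by simp
    next
      fix z assume "z \<in> {z. (x, z) \<in> R\<^sup>*}" then show "z \<in> {z. (y, z) \<in> R\<^sup>*}"
        using yx rtrancl_trans[of y x R z] by simp
    qed
  qed
  have fsame: "f y = f x" if "(x, y) \<in> R\<^sup>*" for x y
    using that by (induction rule: rtrancl_induct) (auto simp: R_def)
  have lm: "l (m x) = f x" for x
  proof -
    have "(SOME y. y \<in> m x) \<in> m x" using xin by (meson someI)
    then show ?thesis unfolding l_def m_def using fsame by auto
  qed
  have vM: "verts M = m ` V" and eM: "edges M = (\<lambda>(a, b). (m a, m b)) ` E"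
    unfolding M_def verts_def edges_def by auto
  have fV: "f ` V = verts H" and fE: "(\<lambda>(a, b). (f a, f b)) ` E = edges H"
    and fEH: "\<And>a b. (a, b) \<in> E \<Longrightarrow> (f a, f b) \<in> edges H"
    using assms(3) unfolding epimorphism_def V_def E_def by auto
  have gM: "is_graph M"
    unfolding is_graph_def vM eM
  proof (intro conjI allI impI ballI)
    show "(\<lambda>(a, b). (m a, m b)) ` E \<subseteq> m ` V \<times> m ` V" using EV by auto
    fix C assume "C \<in> m ` V"
    then obtain v where "v \<in> V" "C = m v" by auto
    then show "(C, C) \<in> (\<lambda>(a, b). (m a, m b)) ` E" using refl[of v] by force
  next
    fix C D assume "(C, D) \<in> (\<lambda>(a, b). (m a, m b)) ` E"
    then obtain a b where "(a, b) \<in> E" "C = m a" "D = m b" by auto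
    then show "(D, C) \<in> (\<lambda>(a, b). (m a, m b)) ` E" using symE[of a b] by force
  qed
  have epm: "epimorphism m G M"
    unfolding epimorphism_def vM eM V_def[symmetric] E_def[symmetric] by auto
  have epl: "epimorphism l M H"
  proof -
    have "l ` m ` V = verts H" using fV lm by (simp add: image_image)
    moreover have "(\<lambda>(a, b). (l a, l b)) ` (\<lambda>(a, b). (m a, m b)) ` E = edges H"
      using fE lm by (simp add: image_image case_prod_beta)
    moreover have "(l a, l b) \<in> edges H" if "(a, b) \<in> (\<lambda>(a, b). (m a, m b)) ` E" for a b
      using that lm fEH by auto
    ultimately show ?thesis unfolding epimorphism_def vM eM by auto
  qed
  have light: "light_epi l M H"
    unfolding light_epi_def
  proof (intro conjI epl ballI impI)
    fix h a b assume h: "l a = h \<and> l b = h \<and> a \<noteq> b"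
    show "(a, b) \<notin> edges M"
    proof
      assume "(a, b) \<in> edges M"
      then obtain u v where uv: "(u, v) \<in> E" "a = m u" "b = m v" unfolding eM by auto
      then have "f u = f v" using h lm by auto
      then have "(u, v) \<in> R" using uv R_def by auto
      then have "v \<in> m u" unfolding m_def by auto
      then have "m v = m u" by (rule msame)
      then show False using h uv by auto
    qed
  qed
  have mono: "monotone_epi m G M"
    unfolding monotone_epi_def
  proof (intro conjI epm allI impI)
    fix S assume S: "S \<subseteq> verts M" and cS: "connected_set M S"
    show "connected_set G (m -` S \<inter> verts G)"
      unfolding connected_set_def disconnected_set_def
    proof
      assume "\<exists>P Q. m -` S \<inter> verts G = P \<union> Q \<and> P \<noteq> {} \<and> Q \<noteq> {} \<and> P \<inter> Q = {}
        \<and> (\<forall>p\<in>P. \<forall>q\<in>Q. (p, q) \<notin> edges G)"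
      then obtain P Q where PQ: "m -` S \<inter> V = P \<union> Q" "P \<noteq> {}" "Q \<noteq> {}" "P \<inter> Q = {}"
        "\<forall>p\<in>P. \<forall>q\<in>Q. (p, q) \<notin> E" unfolding V_def E_def by blast
      have QP: "\<forall>p\<in>Q. \<forall>q\<in>P. (p, q) \<notin> E" using PQ(5) symE by blast
      have cover: "m x \<subseteq> P \<union> Q" if "x \<in> P \<union> Q" for x
      proof
        fix y assume y: "y \<in> m x"
        have "x \<in> V" "m x \<in> S" using that PQ(1) by auto
        moreover have "(x, y) \<in> R\<^sup>*" using y m_def by auto
        then have "y \<in> V" using \<open>x \<in> V\<close>
        proof (induction rule: rtrancl_induct)
          case (step y z) then show ?case using RE EV by auto
        qed simp
        moreover have "m y \<in> S" using msame[OF y] \<open>m x \<in> S\<close> by simp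
        ultimately show "y \<in> P \<union> Q" using PQ(1) by auto
      qed
      have inP: "m x \<subseteq> P" if "x \<in> P" for x
      proof
        fix y assume "y \<in> m x"
        then show "y \<in> P" using comp_in_P[of x y R E P Q] cover that RE PQ(5) m_def by auto
      qed
      have inQ: "m x \<subseteq> Q" if "x \<in> Q" for x
      proof
        fix y assume "y \<in> m x"
        then show "y \<in> Q" using comp_in_P[of x y R E Q P] cover that RE QP m_def by auto
      qed
      have "disconnected_set M S"
        unfolding disconnected_set_def
      proof (intro exI conjI)
        show "S = m ` P \<union> m ` Q"
        proof
          show "S \<subseteq> m ` P \<union> m ` Q"
          proof
            fix C assume "C \<in> S"
            then obtain x where "x \<in> V" "C = m x" using S vM by auto
            then show "C \<in> m ` P \<union> m ` Q" using PQ(1) \<open>C \<in> S\<close> by auto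
          qed
          show "m ` P \<union> m ` Q \<subseteq> S" using PQ(1) by blast
        qed
        show "m ` P \<noteq> {}" "m ` Q \<noteq> {}" using PQ by auto
        show "m ` P \<inter> m ` Q = {}"
        proof (rule ccontr)
          assume "m ` P \<inter> m ` Q \<noteq> {}"
          then obtain p q where "p \<in> P" "q \<in> Q" "m p = m q" by auto
          then have "q \<in> P" using inP[OF \<open>p \<in> P\<close>] xin[of q] by auto
          then show False using \<open>q \<in> Q\<close> PQ(4) by auto
        qed
        show "\<forall>p\<in>m ` P. \<forall>q\<in>m ` Q. (p, q) \<notin> edges M"
        proof (intro ballI notI)
          fix C D assume "C \<in> m ` P" "D \<in> m ` Q" "(C, D) \<in> edges M"
          then obtain p q a b where "p \<in> P" "q \<in> Q" "C = m p" "D = m q" "(a, b) \<in> E"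
            "m a = m p" "m b = m q" unfolding eM by auto
          then have "a \<in> P" "b \<in> Q" using inP[of p] inQ[of q] xin[of a] xin[of b] by auto
          then show False using PQ(5) \<open>(a, b) \<in> E\<close> by auto
        qed
      qed
      then show False using cS unfolding connected_set_def by simp
    qed
  qed
  have "\<forall>x\<in>verts G. f x = l (m x)" using lm by simp
  then show ?thesis using gM epm epl mono light by blast
qed

end
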